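(* Let $\mathcal{P}=\{\mathbf{c}_1+\mathbf{B},\dots,\mathbf{c}_n+\mathbf{B}\}$ be a packing of $n\ge 1$ unit balls with all centers $\mathbf{c}_i\in\Lambda_{fcc}$. Then $$\frac{n\,\mathrm{vol}_3(\mathbf{B})}{\mathrm{vol}_3\left(\bigcup_{i=1}^n(\mathbf{c}_i+\sqrt2\,\mathbf{B})\right)}<\frac{\pi}{\sqrt{18}}.$$
   Context: $\mathbf{B}$ is the closed unit ball centered at the origin of $\mathbb{E}^3$; $\Lambda_{fcc}$ is the face-centered cubic lattice with shortest non-zero vector of length $2$; $\mathrm{vol}_3$ is volume. *)

theory Defs
  imports "HOL-Analysis.Analysis"
begin

text \<open>Face-centred cubic lattice scaled so that its shortest nonzero vector has length 2:
  the points sqrt 2 (a,b,c) with a,b,c integers and a+b+c even.\<close>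
definition fcc_lattice :: "(real^3) set" where
  "fcc_lattice = {x. \<exists>a b c :: int. even (a + b + c) \<and>
      x = sqrt 2 *\<^sub>R vector [real_of_int a, real_of_int b, real_of_int c]}"

definition unit_ball_packing :: "(real^3) set \<Rightarrow> bool" where
  "unit_ball_packing C \<longleftrightarrow>
     (\<forall>c\<in>C. \<forall>d\<in>C. c \<noteq> d \<longrightarrow> ball c 1 \<inter> ball d 1 = {})"

end

theory Submission
  imports Defs
begin

abbreviation "s2 \<equiv> sqrt (2::real)"

lemma s2_sq[simp]: "s2 * s2 = 2" by simp
lemma s2_pos[simp]: "s2 > 0" by simp

lemma vec3_eq: "(x::real^3) = y \<longleftrightarrow> x$1 = y$1 \<and> x$2 = y$2 \<and> x$3 = y$3"
  by (simp add: vec_eq_iff forall_3)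

lemma inner3: "(x::real^3) \<bullet> y = x$1*y$1 + x$2*y$2 + x$3*y$3"
  by (simp add: inner_vec_def sum_3)

lemma fcc_iff: "l \<in> fcc_lattice \<longleftrightarrow> (\<exists>a b c::int. even (a+b+c) \<and> l$1 = s2 * a \<and> l$2 = s2 * b \<and> l$3 = s2 * c)"
  unfolding fcc_lattice_def by (auto simp: vec3_eq)

lemma fcc_diff: assumes "l \<in> fcc_lattice" "l' \<in> fcc_lattice" shows "l - l' \<in> fcc_lattice"
proof -
  obtain a b c where 1: "even (a+b+c)" "l$1 = s2 * a" "l$2 = s2 * b" "l$3 = s2 * c"
    using assms(1) fcc_iff by blast
  obtain a' b' c' where 2: "even (a'+b'+c')" "l'$1 = s2 * a'" "l'$2 = s2 * b'" "l'$3 = s2 * c'"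
    using assms(2) fcc_iff by blast
  have "even ((a-a')+(b-b')+(c-c'))"
  proof -
    have "(a-a')+(b-b')+(c-c') = (a+b+c) - (a'+b'+c')" by simp
    then show ?thesis using 1(1) 2(1) by presburger
  qed
  then show ?thesis unfolding fcc_iff using 1 2
    by (intro exI[of _ "a-a'"] exI[of _ "b-b'"] exI[of _ "c-c'"]) (simp add: algebra_simps)
qed

lemma fcc_add: assumes "l \<in> fcc_lattice" "l' \<in> fcc_lattice" shows "l + l' \<in> fcc_lattice"
proof -
  obtain a b c where 1: "even (a+b+c)" "l$1 = s2 * a" "l$2 = s2 * b" "l$3 = s2 * c"
    using assms(1) fcc_iff by blast
  obtain a' b' c' where 2: "even (a'+b'+c')" "l'$1 = s2 * a'" "l'$2 = s2 * b'" "l'$3 = s2 * c'"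
    using assms(2) fcc_iff by blast
  have "even ((a+a')+(b+b')+(c+c'))"
  proof -
    have "(a+a')+(b+b')+(c+c') = (a+b+c) + (a'+b'+c')" by simp
    then show ?thesis using 1(1) 2(1) by presburger
  qed
  then show ?thesis unfolding fcc_iff using 1 2
    by (intro exI[of _ "a+a'"] exI[of _ "b+b'"] exI[of _ "c+c'"]) (simp add: algebra_simps)
qed

lemma fcc_zero: "0 \<in> fcc_lattice"
  unfolding fcc_iff by (intro exI[of _ 0]) simp

lemma small_int: fixes a :: int assumes "a*a \<le> 1" shows "a \<in> {-1,0,1}"
proof -
  have "\<bar>a\<bar> \<le> 1"
  proof (rule ccontr)
    assume "\<not> \<bar>a\<bar> \<le> 1"
    then have "2 \<le> \<bar>a\<bar>" by simp
    then have "2*2 \<le> \<bar>a\<bar>*\<bar>a\<bar>" by (intro mult_mono) auto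
    then show False using assms by (simp add: abs_mult[symmetric])
  qed
  then show ?thesis by auto
qed

lemma fcc_norm: assumes "l \<in> fcc_lattice" "l \<noteq> 0" shows "2 \<le> norm l"
proof -
  obtain a b c where 1: "even (a+b+c)" "l$1 = s2 * a" "l$2 = s2 * b" "l$3 = s2 * c"
    using assms(1) fcc_iff by blast
  define k where "k = real_of_int (a*a+b*b+c*c)"
  have ii: "l \<bullet> l = 2 * k"
    unfolding inner3 1 k_def by (simp add: algebra_simps)
  have nz: "\<not> (a = 0 \<and> b = 0 \<and> c = 0)" using assms(2) 1 by (auto simp: vec3_eq)
  have "a*a+b*b+c*c \<ge> 2"
  proof (rule ccontr)
    assume "\<not> ?thesis"
    then have "a*a+b*b+c*c \<le> 1" by simp
    moreover have "0 \<le> a*a" "0 \<le> b*b" "0 \<le> c*c" by auto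
    ultimately have "a*a \<le> 1" "b*b \<le> 1" "c*c \<le> 1" "a*a+b*b+c*c \<le> 1" by linarith+
    then have "a \<in> {-1,0,1}" "b \<in> {-1,0,1}" "c \<in> {-1,0,1}" "a*a+b*b+c*c \<le> 1"
      using small_int by auto
    then show False using nz 1(1) by auto
  qed
  then have "(2::real) \<le> k" unfolding k_def by (metis of_int_le_iff of_int_numeral)
  then have "4 \<le> l \<bullet> l" using ii by linarith
  then have "2^2 \<le> (norm l)^2" by (simp add: power2_norm_eq_inner)
  then show ?thesis by (rule power2_le_imp_le) simp
qed

definition vor :: "(real^3) set" where
  "vor = {u. \<forall>l\<in>fcc_lattice. norm u \<le> norm (u - l)}"

lemma vor_le: "u \<in> vor \<Longrightarrow> l \<in> fcc_lattice \<Longrightarrow> norm u \<le> norm (u - l)"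
  unfolding vor_def by auto

lemma vor_coord:
  fixes a b c :: int
  assumes "u \<in> vor" "even (a+b+c)"
  shows "s2 * (a*u$1 + b*u$2 + c*u$3) \<le> a*a + b*b + c*c"
proof -
  define l :: "real^3" where "l = s2 *\<^sub>R vector [real_of_int a, real_of_int b, real_of_int c]"
  have "l \<in> fcc_lattice" unfolding fcc_iff l_def using assms(2) by auto
  then have "norm u \<le> norm (u - l)" using vor_le assms(1) by blast
  then have "u \<bullet> u \<le> (u - l) \<bullet> (u - l)" by (simp add: norm_le)
  also have "(u - l) \<bullet> (u - l) = u \<bullet> u - 2 * (u \<bullet> l) + l \<bullet> l"
    by (simp add: inner_diff_left inner_diff_right inner_commute)
  finally have "2 * (u \<bullet> l) \<le> l \<bullet> l" by simp
  moreover have "u \<bullet> l = s2 * (a*u$1 + b*u$2 + c*u$3)"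
    unfolding inner3 l_def by (simp add: algebra_simps)
  moreover have "l \<bullet> l = 2 * (a*a + b*b + c*c)"
    unfolding inner3 l_def
    by (simp add: algebra_simps)
  ultimately show ?thesis by simp
qed

lemma quad:
  fixes a b c t :: real
  assumes "0\<le>a" "0\<le>b" "0\<le>c" "a+b\<le>t" "a+c\<le>t" "b+c\<le>t"
  shows "a*a+b*b+c*c \<le> t*t"
proof -
  have 1: "b*b \<le> b*(t-a)" by (rule mult_left_mono) (use assms in auto)
  have 2: "c*c \<le> c*(t-a)" by (rule mult_left_mono) (use assms in auto)
  have 3: "(b+c)*(t-a) \<le> t*(t-a)" by (rule mult_right_mono) (use assms in auto)
  have 4: "0 \<le> a*(t-a)" using assms by auto
  show ?thesis using 1 2 3 4 by (simp add: algebra_simps)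
qed

lemma abs_pair:
  fixes x y :: real
  assumes "s2*(x+y) \<le> 2" "s2*(x-y) \<le> 2" "s2*(-x+y) \<le> 2" "s2*(-x-y) \<le> 2"
  shows "\<bar>x\<bar> + \<bar>y\<bar> \<le> s2"
proof -
  have "s2 * (\<bar>x\<bar> + \<bar>y\<bar>) \<le> s2 * s2"
    using assms by (cases "x \<ge> 0"; cases "y \<ge> 0") (auto simp: algebra_simps)
  then show ?thesis by (rule mult_left_le_imp_le) simp
qed

lemma vor_norm: assumes "u \<in> vor" shows "norm u \<le> s2"
proof -
  have e: "s2 * (x*u$1 + y*u$2 + z*u$3) \<le> x*x + y*y + z*z"
    if "even (x+y+z)" for x y z :: int
    using vor_coord[OF assms that] .
  have p12: "\<bar>u$1\<bar> + \<bar>u$2\<bar> \<le> s2"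
    by (rule abs_pair) (use e[of 1 1 0] e[of 1 "-1" 0] e[of "-1" 1 0] e[of "-1" "-1" 0] in auto)
  have p13: "\<bar>u$1\<bar> + \<bar>u$3\<bar> \<le> s2"
    by (rule abs_pair) (use e[of 1 0 1] e[of 1 0 "-1"] e[of "-1" 0 1] e[of "-1" 0 "-1"] in auto)
  have p23: "\<bar>u$2\<bar> + \<bar>u$3\<bar> \<le> s2"
    by (rule abs_pair) (use e[of 0 1 1] e[of 0 1 "-1"] e[of 0 "-1" 1] e[of 0 "-1" "-1"] in auto)
  have "\<bar>u$1\<bar>*\<bar>u$1\<bar> + \<bar>u$2\<bar>*\<bar>u$2\<bar> + \<bar>u$3\<bar>*\<bar>u$3\<bar> \<le> s2 * s2"
    by (rule quad) (use p12 p13 p23 in auto)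
  then have "u \<bullet> u \<le> 2" unfolding inner3 by (simp add: abs_mult[symmetric])
  then have "(norm u)^2 \<le> s2^2" by (simp add: power2_norm_eq_inner)
  then show ?thesis by (rule power2_le_imp_le) simp
qed

lemma vor_compact: "compact vor"
proof -
  have "vor = (\<Inter>l\<in>fcc_lattice. {u. norm u \<le> norm (u - l)})" unfolding vor_def by auto
  moreover have "closed (\<Inter>l\<in>fcc_lattice. {u::real^3. norm u \<le> norm (u - l)})"
    by (intro closed_INT ballI closed_Collect_le continuous_intros)
  ultimately have "closed vor" by simp
  moreover have "bounded vor"
    using vor_norm by (auto simp: bounded_iff)
  ultimately show ?thesis by (simp add: compact_eq_bounded_closed)
qed

lemma fcc_finite: "finite (fcc_lattice \<inter> cball 0 R)"
proof -
  define K where "K = \<lceil>R\<rceil>"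
  define f where "f = (\<lambda>(a,b,c). s2 *\<^sub>R vector [real_of_int a, real_of_int b, real_of_int c] :: real^3)"
  have bnd: "x \<in> {-K..K}" if "\<bar>s2 * real_of_int x\<bar> \<le> R" for x
  proof -
    have "\<bar>real_of_int x\<bar> \<le> \<bar>s2 * real_of_int x\<bar>"
    proof -
      have "1 \<le> s2" by simp
      then have "1 * \<bar>real_of_int x\<bar> \<le> s2 * \<bar>real_of_int x\<bar>" by (intro mult_right_mono) auto
      then show ?thesis by (simp add: abs_mult)
    qed
    then have "\<bar>real_of_int x\<bar> \<le> R" using that by linarith
    moreover have "R \<le> real_of_int K" unfolding K_def by (rule le_of_int_ceiling)
    ultimately have "real_of_int \<bar>x\<bar> \<le> real_of_int K" by simp
    then have "\<bar>x\<bar> \<le> K" by (simp only: of_int_le_iff)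
    then show ?thesis by auto
  qed
  have "fcc_lattice \<inter> cball 0 R \<subseteq> f ` ({-K..K} \<times> {-K..K} \<times> {-K..K})"
  proof
    fix l assume l: "l \<in> fcc_lattice \<inter> cball 0 R"
    then obtain a b c where 1: "even (a+b+c)" "l$1 = s2 * a" "l$2 = s2 * b" "l$3 = s2 * c"
      using fcc_iff by blast
    have n: "norm l \<le> R" using l by auto
    have c: "\<bar>l$i\<bar> \<le> R" for i using component_le_norm_cart[of l i] n by linarith
    have "a \<in> {-K..K}" using bnd[of a] c[of 1] 1(2) by simp
    moreover have "b \<in> {-K..K}" using bnd[of b] c[of 2] 1(3) by simp
    moreover have "c \<in> {-K..K}" using bnd[of c] c[of 3] 1(4) by simp
    ultimately have "a \<in> {-K..K}" "b \<in> {-K..K}" "c \<in> {-K..K}" by auto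
    moreover have "l = f (a,b,c)" unfolding f_def using 1 by (simp add: vec3_eq)
    ultimately show "l \<in> f ` ({-K..K} \<times> {-K..K} \<times> {-K..K})" by blast
  qed
  then show ?thesis by (rule finite_subset) auto
qed

lemma prod3: "prod f (UNIV::3 set) = f 1 * f 2 * f 3"
  unfolding UNIV_3 by (simp add: ac_simps)

definition gvec :: "real^3" where "gvec = vector [2* s2, s2, s2]"

lemma mem_G: "x \<in> box 0 gvec \<longleftrightarrow> 0 < x$1 \<and> x$1 < 2* s2 \<and> 0 < x$2 \<and> x$2 < s2 \<and> 0 < x$3 \<and> x$3 < s2"
  unfolding mem_box_cart gvec_def forall_3 by auto

lemma measure_G: "measure lebesgue (box 0 gvec) = 4 * s2"
proof -
  have "measure lebesgue (box 0 gvec) = measure lborel (box 0 gvec)"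
    by (rule measure_completion) simp
  also have "\<dots> = measure lborel (cbox 0 gvec)"
    by (simp add: measure_lborel_box_eq measure_lborel_cbox_eq)
  also have "\<dots> = prod (\<lambda>i. gvec$i - 0$i) UNIV"
    by (rule content_cbox_cart) (auto simp: interval_ne_empty_cart gvec_def forall_3)
  also have "\<dots> = 2 * s2 * s2 * s2" unfolding prod3 gvec_def by simp
  also have "\<dots> = 4 * s2" by (simp add: mult.assoc[symmetric])
  finally show ?thesis .
qed

lemma int_close: fixes p q :: int assumes "\<bar>s2 * p - s2 * q\<bar> < s2" shows "p = q"
proof -
  have e0: "s2 * p - s2 * q = s2 * real_of_int (p - q)" by (simp add: right_diff_distrib)
  have e: "\<bar>s2 * p - s2 * q\<bar> = s2 * \<bar>real_of_int (p - q)\<bar>"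
    unfolding e0 abs_mult by simp
  have "s2 * \<bar>real_of_int (p - q)\<bar> < s2 * 1" using assms unfolding e by simp
  then have "\<bar>real_of_int (p - q)\<bar> < 1" by (simp only: mult_less_cancel_left_pos s2_pos)
  then have "\<bar>p - q\<bar> < 1" by linarith
  then show ?thesis by simp
qed

lemma int_close2: fixes p q :: int assumes "\<bar>s2 * p - s2 * q\<bar> < 2 * s2" "even (p - q)" shows "p = q"
proof -
  have e0: "s2 * p - s2 * q = s2 * real_of_int (p - q)" by (simp add: right_diff_distrib)
  have e: "\<bar>s2 * p - s2 * q\<bar> = s2 * \<bar>real_of_int (p - q)\<bar>"
    unfolding e0 abs_mult by simp
  have "s2 * \<bar>real_of_int (p - q)\<bar> < s2 * 2" using assms(1) unfolding e by (simp add: mult.commute)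
  then have "\<bar>real_of_int (p - q)\<bar> < 2" by (simp only: mult_less_cancel_left_pos s2_pos)
  then have "\<bar>p - q\<bar> < 2" by linarith
  then have "p - q \<in> {-1, 0, 1}" by auto
  then show ?thesis using assms(2) by (auto; presburger)
qed

lemma G_disj:
  assumes "l \<in> fcc_lattice" "l' \<in> fcc_lattice" "y + l \<in> box 0 gvec" "y + l' \<in> box 0 gvec"
  shows "l = l'"
proof -
  obtain a b c where 1: "even (a+b+c)" "l$1 = s2 * a" "l$2 = s2 * b" "l$3 = s2 * c"
    using assms(1) fcc_iff by blast
  obtain a' b' c' where 2: "even (a'+b'+c')" "l'$1 = s2 * a'" "l'$2 = s2 * b'" "l'$3 = s2 * c'"
    using assms(2) fcc_iff by blast
  have g1: "0 < y$1 + s2*a" "y$1 + s2*a < 2* s2" "0 < y$2 + s2*b" "y$2 + s2*b < s2" "0 < y$3 + s2*c" "y$3 + s2*c < s2"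
    using assms(3) 1 unfolding mem_G by auto
  have g2: "0 < y$1 + s2*a'" "y$1 + s2*a' < 2* s2" "0 < y$2 + s2*b'" "y$2 + s2*b' < s2" "0 < y$3 + s2*c'" "y$3 + s2*c' < s2"
    using assms(4) 2 unfolding mem_G by auto
  have "b = b'" by (rule int_close) (use g1 g2 in linarith)
  moreover have "c = c'" by (rule int_close) (use g1 g2 in linarith)
  moreover have "even (a - a')"
  proof -
    have "a - a' = (a+b+c) - (a'+b'+c')" using \<open>b = b'\<close> \<open>c = c'\<close> by simp
    then show ?thesis using 1(1) 2(1) by presburger
  qed
  then have "a = a'" by (intro int_close2) (use g1 g2 in linarith)
  ultimately show ?thesis using 1 2 by (simp add: vec3_eq)
qed

lemma s2_lt: "s2 < 3/2"
proof (rule ccontr)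
  assume "\<not> s2 < 3/2"
  then have "3/2 * (3/2) \<le> s2 * s2" by (intro mult_mono) auto
  then show False by simp
qed

lemma cover:
  fixes x :: "real^3"
  assumes "norm x < 6"
  shows "\<exists>l \<in> fcc_lattice \<inter> cball 0 12. x - l \<in> vor"
proof -
  define S where "S = fcc_lattice \<inter> cball 0 12"
  have fS: "finite S" unfolding S_def by (rule fcc_finite)
  have 0: "0 \<in> S" unfolding S_def using fcc_zero by simp
  define f where "f = (\<lambda>l. norm (x - l))"
  obtain l where l: "l \<in> S" "\<And>l'. l' \<in> S \<Longrightarrow> f l \<le> f l'"
  proof -
    have "Min (f ` S) \<in> f ` S" using fS 0 by (intro Min_in) auto
    then obtain l where l1: "l \<in> S" and l2: "f l = Min (f ` S)" by auto
    show ?thesis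
    proof (rule that[OF l1])
      fix l' assume "l' \<in> S" then show "f l \<le> f l'" using l2 fS by simp
    qed
  qed
  have "x - l \<in> vor"
    unfolding vor_def
  proof (intro CollectI ballI)
    fix m assume m: "m \<in> fcc_lattice"
    have lL: "l \<in> fcc_lattice" using l(1) S_def by auto
    have lm: "l + m \<in> fcc_lattice" using fcc_add[OF lL m] .
    have eq: "x - l - m = x - (l + m)" by simp
    show "norm (x - l) \<le> norm (x - l - m)"
    proof (cases "norm (l + m) \<le> 12")
      case True
      then have "l + m \<in> S" unfolding S_def using lm by auto
      then have "f l \<le> f (l + m)" by (rule l(2))
      then show ?thesis unfolding f_def eq .
    next
      case False
      have "norm (x - (x - (l + m))) \<le> norm x + norm (x - (l + m))" by (rule norm_triangle_ineq4)
      then have "norm (l + m) \<le> norm x + norm (x - (l + m))" by simp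
      then have "norm (x - (l+m)) > 6" using False assms by linarith
      moreover have "f l \<le> f 0" using 0 by (rule l(2))
      then have "norm (x - l) \<le> norm x" unfolding f_def by simp
      ultimately show ?thesis unfolding eq using assms by linarith
    qed
  qed
  then show ?thesis using l(1) S_def by blast
qed

lemma norm_G: "x \<in> box 0 gvec \<Longrightarrow> norm x < 6"
proof -
  assume x: "x \<in> box 0 gvec"
  have "norm x \<le> (\<Sum>i\<in>UNIV. \<bar>x$i\<bar>)" by (rule norm_le_l1_cart)
  also have "\<dots> = \<bar>x$1\<bar> + \<bar>x$2\<bar> + \<bar>x$3\<bar>" by (simp add: sum_3)
  also have "\<dots> < 4 * s2" using x unfolding mem_G by auto
  also have "\<dots> < 6" using s2_lt by simp
  finally show ?thesis .
qed

lemma trans_mem: fixes a y :: "real^3" shows "y \<in> (+) a ` S \<longleftrightarrow> y - a \<in> S"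
proof
  assume "y \<in> (+) a ` S" then obtain z where "z \<in> S" "y = a + z" by auto
  then show "y - a \<in> S" by simp
next
  assume "y - a \<in> S" then show "y \<in> (+) a ` S" by (intro image_eqI[of _ _ "y - a"]) auto
qed

lemma vor_meas: "vor \<in> lmeasurable" by (rule lmeasurable_compact[OF vor_compact])

lemma vor_measure: "4 * s2 \<le> measure lebesgue vor"
proof -
  define G where "G = box 0 gvec"
  define L0 where "L0 = fcc_lattice \<inter> cball 0 12"
  have fL0: "finite L0" unfolding L0_def by (rule fcc_finite)
  have cov: "G \<subseteq> (\<Union>l\<in>L0. G \<inter> (+) l ` vor)"
  proof
    fix x assume x: "x \<in> G"
    then obtain l where l: "l \<in> L0" "x - l \<in> vor" using cover norm_G unfolding G_def L0_def by blast
    then have "x \<in> (+) l ` vor" by (simp add: trans_mem)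
    then show "x \<in> (\<Union>l\<in>L0. G \<inter> (+) l ` vor)" using x l by blast
  qed
  have mt: "G \<inter> (+) l ` vor \<in> lmeasurable" for l
    unfolding G_def by (intro fmeasurable_Int_fmeasurable lmeasurable_box fmeasurableD measurable_translation vor_meas)
  have mt2: "(+) (- l) ` G \<inter> vor \<in> lmeasurable" for l
    unfolding G_def by (intro fmeasurable_Int_fmeasurable measurable_translation lmeasurable_box fmeasurableD vor_meas)
  have "4 * s2 = measure lebesgue G" using measure_G G_def by simp
  also have "\<dots> \<le> measure lebesgue (\<Union>l\<in>L0. G \<inter> (+) l ` vor)"
    apply (rule measure_mono_fmeasurable[OF cov])
     apply (simp add: G_def)
    apply (rule fmeasurable.finite_UN[OF fL0], rule mt)
    done
  also have "\<dots> \<le> (\<Sum>l\<in>L0. measure lebesgue (G \<inter> (+) l ` vor))"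
    by (rule measure_UNION_le) (use fL0 mt in auto)
  also have "\<dots> = (\<Sum>l\<in>L0. measure lebesgue ((+) (-l) ` G \<inter> vor))"
  proof (rule sum.cong[OF refl])
    fix l :: "real^3"
    have "(+) (-l) ` (G \<inter> (+) l ` vor) = (+) (-l) ` G \<inter> vor"
      by (auto simp: trans_mem)
    then show "measure lebesgue (G \<inter> (+) l ` vor) = measure lebesgue ((+) (-l) ` G \<inter> vor)"
      using measure_translation[of "-l" "G \<inter> (+) l ` vor"] by simp
  qed
  also have "\<dots> = measure lebesgue (\<Union>l\<in>L0. (+) (-l) ` G \<inter> vor)"
  proof (rule measure_negligible_finite_Union_image[symmetric, OF fL0 mt2])
    show "pairwise (\<lambda>l l'. negligible (((+) (-l) ` G \<inter> vor) \<inter> ((+) (-l') ` G \<inter> vor))) L0"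
    proof (rule pairwiseI)
      fix l l' assume l: "l \<in> L0" "l' \<in> L0" "l \<noteq> l'"
      have "((+) (-l) ` G \<inter> vor) \<inter> ((+) (-l') ` G \<inter> vor) = {}"
      proof (rule ccontr)
        assume "\<not> ?thesis"
        then obtain y where "y \<in> (+) (-l) ` G" "y \<in> (+) (-l') ` G" by blast
        then have "y - (-l) \<in> G" "y - (-l') \<in> G" by (simp_all only: trans_mem)
        then have "y + l \<in> box 0 gvec" "y + l' \<in> box 0 gvec" by (simp_all add: G_def)
        then have "l = l'" using G_disj l unfolding L0_def by blast
        then show False using l by simp
      qed
      then show "negligible (((+) (-l) ` G \<inter> vor) \<inter> ((+) (-l') ` G \<inter> vor))" by simp
    qed
  qed
  also have "\<dots> \<le> measure lebesgue vor"
    apply (rule measure_mono_fmeasurable)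
      apply blast
     apply (rule fmeasurableD, rule fmeasurable.finite_UN[OF fL0], rule mt2)
    apply (rule vor_meas)
    done
  finally show ?thesis .
qed

lemma ball_eq: "(\<lambda>x. c + x) ` ((\<lambda>y. s2 *\<^sub>R y) ` cball 0 1) = cball (c::real^3) s2"
proof (intro equalityI subsetI)
  fix x assume "x \<in> (\<lambda>x. c + x) ` ((\<lambda>y. s2 *\<^sub>R y) ` cball 0 1)"
  then obtain y where y: "norm y \<le> 1" "x = c + s2 *\<^sub>R y" by auto
  have "dist c x = s2 * norm y" using y(2) by (simp add: dist_norm)
  also have "\<dots> \<le> s2" using y(1) by simp
  finally show "x \<in> cball c s2" by simp
next
  fix x assume x: "x \<in> cball c s2"
  define y where "y = (1/s2) *\<^sub>R (x - c)"
  have "norm y = norm (x - c) / s2" unfolding y_def by simp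
  also have "norm (x - c) = dist c x" by (simp add: dist_norm norm_minus_commute)
  finally have "norm y \<le> 1" using x by simp
  moreover have "x = c + s2 *\<^sub>R y" unfolding y_def by simp
  ultimately show "x \<in> (\<lambda>x. c + x) ` ((\<lambda>y. s2 *\<^sub>R y) ` cball 0 1)" by auto
qed

lemma vor_overlap:
  assumes c: "c \<in> fcc_lattice" and c': "c' \<in> fcc_lattice" and ne: "c \<noteq> c'"
  shows "negligible ((+) c ` vor \<inter> (+) c' ` vor)"
proof (rule negligible_subset)
  show "negligible {x. (2 *\<^sub>R (c' - c)) \<bullet> x = c' \<bullet> c' - c \<bullet> c}"
    by (rule negligible_hyperplane) (use ne in auto)
  show "(+) c ` vor \<inter> (+) c' ` vor \<subseteq> {x. (2 *\<^sub>R (c' - c)) \<bullet> x = c' \<bullet> c' - c \<bullet> c}"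
  proof
    fix x assume "x \<in> (+) c ` vor \<inter> (+) c' ` vor"
    then have v: "x - c \<in> vor" "x - c' \<in> vor" by (simp_all add: trans_mem)
    have "norm (x - c) \<le> norm (x - c - (c' - c))" using vor_le[OF v(1) fcc_diff[OF c' c]] .
    moreover have "norm (x - c') \<le> norm (x - c' - (c - c'))" using vor_le[OF v(2) fcc_diff[OF c c']] .
    ultimately have "norm (x - c) = norm (x - c')" by simp
    then have "(x - c) \<bullet> (x - c) = (x - c') \<bullet> (x - c')" by (metis power2_norm_eq_inner)
    then have "(2 *\<^sub>R (c' - c)) \<bullet> x = c' \<bullet> c' - c \<bullet> c"
      by (simp add: inner_diff_left inner_diff_right inner_commute algebra_simps)
    then show "x \<in> {x. (2 *\<^sub>R (c' - c)) \<bullet> x = c' \<bullet> c' - c \<bullet> c}" by simp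
  qed
qed

lemma norm_sq_le: fixes v :: "real^3" assumes "v \<bullet> v \<le> r * r" "0 \<le> r" shows "norm v \<le> r"
proof -
  have 1: "(norm v)^2 = v \<bullet> v" by (simp only: power2_norm_eq_inner)
  have 2: "r^2 = r * r" by (simp add: power2_eq_square)
  have "(norm v)^2 \<le> r^2" using assms(1) 1 2 by linarith
  then show ?thesis by (rule power2_le_imp_le) fact
qed

theorem mainTheorem10:
  fixes C :: "(real^3) set" and n :: nat
  assumes "finite C" and "card C = n" and "n \<ge> 1"
    and "C \<subseteq> fcc_lattice"
    and "unit_ball_packing C"
  shows "real n * measure lebesgue (cball (0::real^3) 1)
           / measure lebesgue (\<Union>c\<in>C. (\<lambda>x. c + x) ` ((\<lambda>y. sqrt 2 *\<^sub>R y) ` cball 0 1))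
         < pi / sqrt 18"
proof -
  define U where "U = (\<Union>c\<in>C. cball c s2)"
  have Ueq: "(\<Union>c\<in>C. (\<lambda>x. c + x) ` ((\<lambda>y. s2 *\<^sub>R y) ` cball 0 1)) = U"
    unfolding U_def using ball_eq by simp
  have Um: "U \<in> lmeasurable" unfolding U_def
    by (rule lmeasurable_compact) (use assms(1) in auto)
  define W where "W = (\<Union>c\<in>C. (+) c ` vor)"
  have Wm: "W \<in> lmeasurable" unfolding W_def
    by (rule fmeasurable.finite_UN[OF assms(1)], rule measurable_translation, rule vor_meas)
  have WU: "W \<subseteq> U"
  proof
    fix x assume "x \<in> W"
    then obtain c where c: "c \<in> C" "x - c \<in> vor" unfolding W_def by (auto simp: trans_mem)
    then have "norm (x - c) \<le> s2" using vor_norm by blast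
    then have "x \<in> cball c s2" by (simp add: dist_norm norm_minus_commute)
    then show "x \<in> U" unfolding U_def using c by blast
  qed
  have measW: "measure lebesgue W = real n * measure lebesgue vor"
  proof -
    have "measure lebesgue W = (\<Sum>c\<in>C. measure lebesgue ((+) c ` vor))"
      unfolding W_def
    proof (rule measure_negligible_finite_Union_image[OF assms(1)])
      show "(+) c ` vor \<in> lmeasurable" for c by (rule measurable_translation, rule vor_meas)
      show "pairwise (\<lambda>c c'. negligible ((+) c ` vor \<inter> (+) c' ` vor)) C"
        using vor_overlap assms(4) by (auto simp: pairwise_def)
    qed
    also have "\<dots> = (\<Sum>c\<in>C. measure lebesgue vor)" by (simp add: measure_translation)
    finally show ?thesis using assms(2) by simp
  qed
  have "C \<noteq> {}" using assms(2,3) by auto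
  define m where "m = Max ((\<lambda>c. c$1) ` C)"
  have "m \<in> (\<lambda>c. c$1) ` C" unfolding m_def using assms(1) \<open>C \<noteq> {}\<close> by (intro Max_in) auto
  then obtain c0 where c0: "c0 \<in> C" "c0$1 = m" by auto
  have cmax: "c$1 \<le> c0$1" if "c \<in> C" for c
    unfolding c0(2) m_def using assms(1) that by (intro Max_ge) auto
  define d where "d = c0 + s2 *\<^sub>R vector [1, 1, 0]"
  have c0L: "c0 \<in> fcc_lattice" using c0(1) assms(4) by auto
  have vL: "s2 *\<^sub>R vector [1, 1, 0] \<in> fcc_lattice"
    unfolding fcc_iff by (rule exI[of _ 1], rule exI[of _ 1], rule exI[of _ 0]) simp
  have dL: "d \<in> fcc_lattice" unfolding d_def by (rule fcc_add[OF c0L vL])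
  have dC: "d \<notin> C"
  proof
    assume "d \<in> C"
    then have "d$1 \<le> c0$1" by (rule cmax)
    then show False unfolding d_def by simp
  qed
  define p where "p = c0 + s2 *\<^sub>R vector [3/5, 3/5, 0]"
  define E where "E = ball p (1/10)"
  have pc0: "norm (p - c0) \<le> 6/5"
    by (rule norm_sq_le) (simp_all add: p_def inner3 algebra_simps)
  have pd: "norm (p - d) \<le> 4/5"
    by (rule norm_sq_le) (simp_all add: p_def d_def inner3 algebra_simps)
  have s2_gt: "13/10 < s2"
  proof (rule ccontr)
    assume "\<not> 13/10 < s2"
    then have "s2 * s2 \<le> 13/10 * (13/10)" by (intro mult_mono) auto
    then show False by simp
  qed
  have EU: "E \<subseteq> U"
  proof
    fix u assume "u \<in> E"
    then have "norm (u - p) < 1/10" unfolding E_def by (simp add: dist_norm norm_minus_commute)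
    moreover have "norm (u - c0) \<le> norm (u - p) + norm (p - c0)"
      using norm_triangle_ineq[of "u - p" "p - c0"] by simp
    ultimately have "norm (u - c0) \<le> s2" using pc0 s2_gt by linarith
    then have "u \<in> cball c0 s2" by (simp add: dist_norm norm_minus_commute)
    then show "u \<in> U" unfolding U_def using c0(1) by blast
  qed
  have EW: "E \<inter> W = {}"
  proof (rule ccontr)
    assume "E \<inter> W \<noteq> {}"
    then obtain u where u0: "u \<in> E" "u \<in> W" by blast
    then obtain c where c: "c \<in> C" "u \<in> (+) c ` vor" unfolding W_def by blast
    then have "u - c \<in> vor" by (simp only: trans_mem)
    with u0 c have u: "u \<in> E" "c \<in> C" "u - c \<in> vor" by auto
    have cL: "c \<in> fcc_lattice" using u(2) assms(4) by auto
    have up: "norm (u - p) < 1/10" using u(1) unfolding E_def by (simp add: dist_norm norm_minus_commute)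
    have "norm (u - d) \<le> norm (u - p) + norm (p - d)"
      using norm_triangle_ineq[of "u - p" "p - d"] by simp
    then have ud: "norm (u - d) < 9/10" using up pd by linarith
    have "norm (u - c) \<le> norm (u - c - (d - c))" by (rule vor_le[OF u(3) fcc_diff[OF dL cL]])
    then have uc: "norm (u - c) < 9/10" using ud by simp
    have "norm (d - c) \<le> norm (u - c) + norm (u - d)"
      using norm_triangle_ineq4[of "u - c" "u - d"] by simp
    then have "norm (d - c) < 2" using uc ud by linarith
    moreover have "d - c \<noteq> 0" using dC u(2) by auto
    ultimately show False using fcc_norm[OF fcc_diff[OF dL cL]] by linarith
  qed
  have Em: "E \<in> lmeasurable" unfolding E_def by simp
  have Epos: "0 < measure lebesgue E"
  proof -
    have "measure lebesgue E = measure lborel E" unfolding E_def by (rule measure_completion) simp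
    moreover have "0 < measure lborel E" unfolding E_def by simp
    ultimately show ?thesis by simp
  qed
  have "measure lebesgue (W \<union> E) = measure lebesgue W + measure lebesgue E"
    using measure_Un3[OF Wm Em] EW by (simp add: Int_commute)
  moreover have "measure lebesgue (W \<union> E) \<le> measure lebesgue U"
    by (rule measure_mono_fmeasurable) (use WU EU Um Wm Em in \<open>auto intro: sets.Un fmeasurableD\<close>)
  ultimately have "real n * measure lebesgue vor + measure lebesgue E \<le> measure lebesgue U"
    using measW by simp
  moreover have "4 * s2 * real n \<le> real n * measure lebesgue vor"
  proof -
    have "real n * (4 * s2) \<le> real n * measure lebesgue vor"
      by (rule mult_left_mono[OF vor_measure]) simp
    then show ?thesis by (simp add: mult.commute mult.left_commute)
  qed
  ultimately have MU: "4 * s2 * real n < measure lebesgue U" using Epos by linarith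
  have ballm: "measure lebesgue (cball (0::real^3) 1) = 4/3 * pi"
  proof -
    have "measure lebesgue (cball (0::real^3) 1) = measure lborel (cball (0::real^3) 1)"
      by (rule measure_completion) simp
    also have "\<dots> = 4/3 * pi" by (simp add: content_cball unit_ball_vol_3)
    finally show ?thesis .
  qed
  have s18: "sqrt 18 = 3 * s2"
    using real_sqrt_mult[of 9 2] by simp
  have npos: "0 < real n" using assms(3) by simp
  have "real n * (4/3 * pi) / measure lebesgue U < real n * (4/3 * pi) / (4 * s2 * real n)"
  proof (rule divide_strict_left_mono[OF MU])
    have "0 < 4 * s2 * real n" using npos by simp
    then have Mp: "0 < measure lebesgue U" using MU by linarith
    show "0 < measure lebesgue U * (4 * s2 * real n)"
      using Mp \<open>0 < 4 * s2 * real n\<close> by (rule mult_pos_pos)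
    show "0 < real n * (4/3 * pi)" using npos by simp
  qed
  also have "\<dots> = pi / (3 * s2)" using npos by (simp add: field_simps)
  finally show ?thesis unfolding Ueq ballm s18 .
qed

end
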